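(* Let $Y$ be a closed infinite-dimensional subspace of $\mathfrak X_0$ such that the operator $id|_Y:(Y,\|\cdot\|_{W_0})\to\mathfrak X_{G_0}$ is not compact. Then $(Y,\|\cdot\|_{W_0})$ is not isomorphic to a subspace of $c_0$.
   Context: All spaces are real. Let $c_{00}(\mathbb N)$ be the space of finitely supported real sequences, $(e_n)$ its unit vector basis and $e_n^*$ the coordinate functionals (elements of $c_{00}(\mathbb N)$ act on each other via the usual inner product). For $x\in c_{00}(\mathbb N)$, $\operatorname{supp}x=\{n:x(n)\ne0\}$ and $\operatorname{ran}x$ is the smallest interval of $\mathbb N$ containing $\operatorname{supp}x$; for nonzero $x,y$ write $x<y$ if $\max\operatorname{ran}x<\min\operatorname{ran}y$. For an interval $E\subset\mathbb N$, $Ef=f\cdot\chi_E$. Put $m_1=2^8$, $m_{j+1}=m_j^5$, $n_1=2^7$, $n_{j+1}=(2n_j)^{s_{j+1}}$ with $s_{j+1}=\log_2(m_{j+1}^4)$. $G_0$ is the smallest subset of $c_{00}(\mathbb N)$ such that: (1) it contains all $e_n^*$; (2) it is symmetric; (3) for every $j\in\mathbb N$, every $d\le n_{2j}$ and every $f_1<\dots<f_d$ in $G_0$, it contains $\frac1{m_{2j}}\sum_{i=1}^d f_i$; (4) it contains $\sum_{i=1}^d a_if_i$ whenever $d\in\mathbb N$, $a_i\in\mathbb Q$, $\sum a_i^2\le1$, and $f_i\in G_0$ have pairwise different weights. An $f\in G_0$ has weight $w(f)=m_{2j}$ (and is called a functional with weight) if $f=\frac1{m_{2j}}\sum_{i=1}^d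 f_i$ for some $d\le n_{2j}$ and $f_1<\dots<f_d$ in $G_0$. Fix disjoint infinite sets $\Omega_1,\Omega_2\subset\mathbb N$, let $Q_s$ be the (countable) set of finite sequences $(f_1,\dots,f_d)$ of nonzero elements of $G_0$ with $f_1<\dots<f_d$, and fix an injection $\sigma:Q_s\to\{2j:j\in\Omega_2\}$ with $m_{\sigma(f_1,\dots,f_d)}>\max\{1/|f_i(e_l)|:i\le d,\ l\in\operatorname{supp}f_i\}\cdot\max\operatorname{supp}f_d$. A $\sigma$-$n_{2j+1}$ special sequence is an element $(f_1,\dots,f_{n_{2j+1}})$ of $Q_s$ such that each $f_i$ is a functional with weight, $w(f_1)=m_{2j_1}$ with $j_1\in\Omega_1$ and $n_{2j+1}^2<m_{2j_1}$, and $w(f_{i+1})=m_{\sigma(f_1,\dots,f_i)}$ for $1\le i<n_{2j+1}$. $W_0=G_0\cup\{\varepsilon E(\frac1{m_{2j+1}}\sum_{i=1}^{n_{2j+1}}f_i):|\varepsilon|=1,\ E\text{ a finite interval of }\mathbb N,\ (f_i)\text{ a }\sigma\text{-}n_{2j+1}\text{ special sequence}\}$. For $x\in c_{00}(\mathbb N)$ let $\|x\|_{G_0}=\sup_{f\in G_0}|f(x)|$ and $\|x\|_{W_0}=\sup_{f\in W_0}|f(x)|$; $\mathfrak{X}_{G_0}$ and $\mathfrak{X}_0$ are the completions of $c_{00}(\mathbb N)$ under these norms. Since $G_0\subset W_0$ the formal identity $id:\mathfrak X_0\to\mathfrak X_{G_0}$ is bounded; $id|_Y$ is its restriction. *)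

theory Defs
  imports "HOL-Analysis.Analysis"
begin

text \<open>Coordinates are indexed by nat starting at 0 (coordinate l here is coordinate l+1
  of the paper); elements of c00 are finitely supported functions nat => real.\<close>

definition supp :: "(nat \<Rightarrow> real) \<Rightarrow> nat set" where
  "supp x = {n. x n \<noteq> 0}"

definition c00 :: "(nat \<Rightarrow> real) set" where
  "c00 = {x. finite (supp x)}"

definition blk_less :: "(nat \<Rightarrow> real) \<Rightarrow> (nat \<Rightarrow> real) \<Rightarrow> bool" where
  "blk_less x y \<longleftrightarrow> x \<in> c00 \<and> y \<in> c00 \<and> supp x \<noteq> {} \<and> supp y \<noteq> {} \<and> Max (supp x) < Min (supp y)"

definition unitf :: "nat \<Rightarrow> nat \<Rightarrow> real" where
  "unitf k = (\<lambda>n. if n = k then 1 else 0)"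

definition pair :: "(nat \<Rightarrow> real) \<Rightarrow> (nat \<Rightarrow> real) \<Rightarrow> real" where
  "pair f x = (\<Sum>n\<in>supp f. f n * x n)"

fun mseq :: "nat \<Rightarrow> nat" where
  "mseq 0 = 1"
| "mseq (Suc 0) = 2^8"
| "mseq (Suc (Suc j)) = mseq (Suc j) ^ 5"

definition sseq :: "nat \<Rightarrow> nat" where
  "sseq k = (THE t. (2::nat) ^ t = mseq k ^ 4)"

fun nseq :: "nat \<Rightarrow> nat" where
  "nseq 0 = 1"
| "nseq (Suc 0) = 2^7"
| "nseq (Suc (Suc j)) = (2 * nseq (Suc j)) ^ sseq (Suc (Suc j))"

definition avgf :: "nat \<Rightarrow> (nat \<Rightarrow> real) list \<Rightarrow> nat \<Rightarrow> real" where
  "avgf k fs = (\<lambda>n. (\<Sum>f\<leftarrow>fs. f n) / real (mseq k))"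

inductive_set G0 :: "(nat \<Rightarrow> real) set" where
  unit: "unitf k \<in> G0"
| neg: "f \<in> G0 \<Longrightarrow> (\<lambda>n. - f n) \<in> G0"
| avg: "\<lbrakk>j \<ge> 1; fs \<noteq> []; length fs \<le> nseq (2*j); sorted_wrt blk_less fs;
         \<forall>f\<in>set fs. f \<in> G0\<rbrakk> \<Longrightarrow> avgf (2*j) fs \<in> G0"
| comb: "\<lbrakk>ps \<noteq> [];
          \<forall>(a, j, f)\<in>set ps. a \<in> \<rat> \<and> f \<in> G0 \<and>
             (\<exists>gs. j \<ge> 1 \<and> gs \<noteq> [] \<and> length gs \<le> nseq (2*j) \<and> sorted_wrt blk_less gs \<and>
                   (\<forall>g\<in>set gs. g \<in> G0) \<and> f = avgf (2*j) gs);
          distinct (map (\<lambda>(a, j, f). j) ps);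
          (\<Sum>(a, j, f)\<leftarrow>ps. a^2) \<le> 1\<rbrakk>
         \<Longrightarrow> (\<lambda>n. \<Sum>(a, j, f)\<leftarrow>ps. a * f n) \<in> G0"

definition has_weight :: "(nat \<Rightarrow> real) \<Rightarrow> nat \<Rightarrow> bool" where
  "has_weight f w \<longleftrightarrow> (\<exists>j gs. j \<ge> 1 \<and> w = mseq (2*j) \<and> gs \<noteq> [] \<and> length gs \<le> nseq (2*j) \<and>
       sorted_wrt blk_less gs \<and> set gs \<subseteq> G0 \<and> f = avgf (2*j) gs)"

definition Qs :: "(nat \<Rightarrow> real) list set" where
  "Qs = {fs. fs \<noteq> [] \<and> set fs \<subseteq> G0 \<and> (\<forall>f\<in>set fs. supp f \<noteq> {}) \<and> sorted_wrt blk_less fs}"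

text \<open>Admissible coding function; the +1 converts our 0-based coordinates to the paper's.\<close>
definition admissible_sigma :: "nat set \<Rightarrow> ((nat \<Rightarrow> real) list \<Rightarrow> nat) \<Rightarrow> bool" where
  "admissible_sigma \<Omega>2 \<sigma> \<longleftrightarrow> inj_on \<sigma> Qs \<and> (\<forall>fs\<in>Qs. \<sigma> fs \<in> {2*j | j. j \<in> \<Omega>2}) \<and>
     (\<forall>fs\<in>Qs. real (mseq (\<sigma> fs)) >
        Max {1 / \<bar>f l\<bar> | f l. f \<in> set fs \<and> l \<in> supp f} * real (Max (supp (last fs)) + 1))"

definition special_seq :: "((nat \<Rightarrow> real) list \<Rightarrow> nat) \<Rightarrow> nat set \<Rightarrow> nat \<Rightarrow> (nat \<Rightarrow> real) list \<Rightarrow> bool" where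
  "special_seq \<sigma> \<Omega>1 j fs \<longleftrightarrow> fs \<in> Qs \<and> length fs = nseq (2*j+1) \<and>
     (\<exists>j1\<in>\<Omega>1. has_weight (fs!0) (mseq (2*j1)) \<and> nseq (2*j+1)^2 < mseq (2*j1)) \<and>
     (\<forall>i. 1 \<le> i \<and> i < length fs \<longrightarrow> has_weight (fs!i) (mseq (\<sigma> (take i fs))))"

definition restr :: "nat set \<Rightarrow> (nat \<Rightarrow> real) \<Rightarrow> nat \<Rightarrow> real" where
  "restr E f = (\<lambda>n. if n \<in> E then f n else 0)"

definition W0 :: "((nat \<Rightarrow> real) list \<Rightarrow> nat) \<Rightarrow> nat set \<Rightarrow> (nat \<Rightarrow> real) set" where
  "W0 \<sigma> \<Omega>1 = G0 \<union> {(\<lambda>n. \<epsilon> * restr E (avgf (2*j+1) fs) n) | \<epsilon> E j fs.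
        \<bar>\<epsilon>\<bar> = 1 \<and> (\<exists>a b. E = {a..b}) \<and> j \<ge> 1 \<and> special_seq \<sigma> \<Omega>1 j fs}"

definition normG0 :: "(nat \<Rightarrow> real) \<Rightarrow> real" where
  "normG0 x = (SUP f\<in>G0. \<bar>pair f x\<bar>)"

definition normW0 :: "((nat \<Rightarrow> real) list \<Rightarrow> nat) \<Rightarrow> nat set \<Rightarrow> (nat \<Rightarrow> real) \<Rightarrow> real" where
  "normW0 \<sigma> \<Omega>1 x = (SUP f\<in>W0 \<sigma> \<Omega>1. \<bar>pair f x\<bar>)"

definition is_completion :: "((nat \<Rightarrow> real) \<Rightarrow> real) \<Rightarrow> ((nat \<Rightarrow> real) \<Rightarrow> 'a::banach) \<Rightarrow> bool" where
  "is_completion nrm J \<longleftrightarrow>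
     (\<forall>x\<in>c00. \<forall>y\<in>c00. \<forall>a b. J (\<lambda>n. a * x n + b * y n) = a *\<^sub>R J x + b *\<^sub>R J y) \<and>
     (\<forall>x\<in>c00. norm (J x) = nrm x) \<and> closure (J ` c00) = UNIV"

definition c0 :: "(nat \<Rightarrow> real) set" where
  "c0 = {x. x \<longlonglongrightarrow> 0}"

definition supnorm :: "(nat \<Rightarrow> real) \<Rightarrow> real" where
  "supnorm x = (SUP n. \<bar>x n\<bar>)"

definition iso_to_subspace_c0 :: "'a::real_normed_vector set \<Rightarrow> bool" where
  "iso_to_subspace_c0 Y \<longleftrightarrow> (\<exists>U. (\<forall>y\<in>Y. U y \<in> c0) \<and>
     (\<forall>y\<in>Y. \<forall>z\<in>Y. \<forall>a b. U (a *\<^sub>R y + b *\<^sub>R z) = (\<lambda>n. a * U y n + b * U z n)) \<and>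
     (\<exists>c C. 0 < c \<and> 0 < C \<and> (\<forall>y\<in>Y. c * norm y \<le> supnorm (U y) \<and> supnorm (U y) \<le> C * norm y)))"

end

theory Submission
  imports Defs "HOL-Library.Diagonal_Subsequence"
begin



lemma sum_blk_bound:
  assumes "sorted_wrt blk_less fs" "\<forall>f\<in>set fs. \<bar>f n\<bar> \<le> B" "0 \<le> B"
  shows "\<bar>\<Sum>f\<leftarrow>fs. f n\<bar> \<le> B"
  using assms
proof (induction fs)
  case Nil then show ?case by simp
next
  case (Cons f fs)
  show ?case
  proof (cases "f n = 0")
    case True then show ?thesis using Cons by simp
  next
    case False
    have "\<forall>g\<in>set fs. g n = 0"
    proof
      fix g assume g: "g \<in> set fs"
      then have bl: "blk_less f g" using Cons.prems(1) by simp
      then have "n \<in> supp f" "finite (supp f)" "finite (supp g)" "supp g \<noteq> {}"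
        using False by (auto simp: supp_def blk_less_def c00_def)
      then have "n \<le> Max (supp f)" by simp
      with bl have "n < Min (supp g)" by (auto simp: blk_less_def)
      then have "n \<notin> supp g" using \<open>finite (supp g)\<close> Min_le by fastforce
      then show "g n = 0" by (simp add: supp_def)
    qed
    then have "(\<Sum>f\<leftarrow>fs. f n) = 0" by (induction fs) auto
    then show ?thesis using Cons.prems by simp
  qed
qed

lemma mseq_ge: "mseq k \<ge> 2 ^ k"
proof (induction k rule: mseq.induct)
  case 1 then show ?case by simp
next
  case 2 then show ?case by simp
next
  case (3 j)
  have "(2::nat) ^ Suc (Suc j) \<le> 2 ^ (5 * Suc j)" by (intro power_increasing) auto
  also have "\<dots> = (2 ^ Suc j) ^ 5" by (metis power_mult mult.commute)
  also have "\<dots> \<le> mseq (Suc j) ^ 5" using 3 by (intro power_mono) auto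
  finally show ?case by simp
qed

lemma mseq_pos: "mseq k \<ge> 1"
  using mseq_ge[of k] by (metis le_trans one_le_power one_le_numeral)

lemma geom_set_bound:
  fixes J :: "nat set"
  assumes "finite J" "0 \<notin> J"
  shows "(\<Sum>j\<in>J. (1/2::real)^j) \<le> 1"
proof -
  obtain N where N: "J \<subseteq> {..<N}" using assms(1) finite_nat_bounded by blast
  have sub: "J \<subseteq> Suc ` {..<N}"
  proof
    fix x assume x: "x \<in> J"
    then have "x \<noteq> 0" using assms(2) by metis
    then obtain y where "x = Suc y" using not0_implies_Suc by blast
    then show "x \<in> Suc ` {..<N}" using x N by auto
  qed
  have "(\<Sum>j\<in>J. (1/2::real)^j) \<le> (\<Sum>j\<in>Suc ` {..<N}. (1/2::real)^j)"
    using sub by (intro sum_mono2) auto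
  also have "\<dots> = (\<Sum>i<N. (1/2::real)^(Suc i))"
    by (subst sum.reindex) auto
  also have "\<dots> = (1/2) * (\<Sum>i<N. (1/2::real)^i)"
    by (simp add: sum_distrib_left)
  also have "\<dots> = 1 - (1/2)^N"
    by (simp add: sum_gp_strict)
  also have "\<dots> \<le> 1" by simp
  finally show ?thesis .
qed

lemma avgf_bound:
  assumes "sorted_wrt blk_less gs" "\<forall>g\<in>set gs. \<bar>g n\<bar> \<le> 1"
  shows "\<bar>avgf k gs n\<bar> \<le> 1 / real (mseq k)"
proof -
  have "\<bar>\<Sum>f\<leftarrow>gs. f n\<bar> \<le> 1" using sum_blk_bound[OF assms] by simp
  moreover have "real (mseq k) \<ge> 1" using mseq_pos[of k] by simp
  ultimately show ?thesis by (simp add: avgf_def abs_div divide_right_mono)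
qed

lemma sum_list_ge_elem:
  fixes g :: "'a \<Rightarrow> real"
  shows "x \<in> set xs \<Longrightarrow> \<forall>y\<in>set xs. 0 \<le> g y \<Longrightarrow> g x \<le> (\<Sum>y\<leftarrow>xs. g y)"
proof (induction xs)
  case Nil then show ?case by simp
next
  case (Cons z zs)
  have "0 \<le> (\<Sum>y\<leftarrow>zs. g y)" using Cons.prems(2) by (intro sum_list_nonneg) auto
  then show ?case using Cons by auto
qed

lemma G0_bound: "f \<in> G0 \<Longrightarrow> \<bar>f n\<bar> \<le> 1"
proof (induction f rule: G0.induct)
  case (unit k) then show ?case by (simp add: unitf_def)
next
  case (neg f) then show ?case by simp
next
  case (avg j fs)
  have "\<bar>avgf (2*j) fs n\<bar> \<le> 1 / real (mseq (2*j))"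
    using avg by (intro avgf_bound) auto
  also have "\<dots> \<le> 1" using mseq_pos[of "2*j"] by simp
  finally show ?case .
next
  case (comb ps)
  have each: "\<bar>a * f n\<bar> \<le> (1/2)^j" if "(a, j, f) \<in> set ps" for a j f
  proof -
    have "\<exists>gs. 1 \<le> j \<and> sorted_wrt blk_less gs \<and> (\<forall>g\<in>set gs. \<bar>g n\<bar> \<le> 1) \<and>
      f = avgf (2*j) gs"
      using bspec[OF comb(4) that] by auto
    then obtain gs where gs: "1 \<le> j" "sorted_wrt blk_less gs" "\<forall>g\<in>set gs. \<bar>g n\<bar> \<le> 1"
      "f = avgf (2*j) gs" by blast
    have "(\<lambda>(a, j, f). a^2) (a,j,f) \<le> (\<Sum>x\<leftarrow>ps. (\<lambda>(a, j, f). a^2) x)"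
      using that by (intro sum_list_ge_elem) auto
    then have "a^2 \<le> 1" using comb(3) by simp
    then have a1: "\<bar>a\<bar> \<le> 1" by (simp add: abs_square_le_1)
    have "\<bar>f n\<bar> \<le> 1 / real (mseq (2*j))" using gs avgf_bound by simp
    also have "\<dots> \<le> 1 / 2^(2*j)"
    proof -
      have "real (2^(2*j)) \<le> real (mseq (2*j))" using mseq_ge by (simp only: of_nat_le_iff)
      then show ?thesis using mseq_pos[of "2*j"] by (intro divide_left_mono) auto
    qed
    also have "\<dots> \<le> (1/2)^j"
    proof -
      have "(2::real)^j \<le> 2^(2*j)" by (intro power_increasing) auto
      then show ?thesis by (simp add: power_one_over divide_left_mono)
    qed
    finally have "\<bar>f n\<bar> \<le> (1/2)^j" .
    then have "\<bar>a\<bar> * \<bar>f n\<bar> \<le> 1 * (1/2)^j"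
      using a1 by (intro mult_mono) auto
    then show ?thesis by (simp add: abs_mult)
  qed
  have "\<bar>\<Sum>(a, j, f)\<leftarrow>ps. a * f n\<bar> \<le> (\<Sum>x\<leftarrow>ps. \<bar>(\<lambda>(a, j, f). a * f n) x\<bar>)"
    using sum_list_abs[of "map (\<lambda>(a,j,f). a * f n) ps"] by (simp add: o_def)
  also have "\<dots> \<le> (\<Sum>x\<leftarrow>ps. (\<lambda>(a, j, f). (1/2::real)^j) x)"
    by (rule sum_list_mono) (use each in auto)
  also have "\<dots> = (\<Sum>j\<leftarrow>map (\<lambda>(a, j, f). j) ps. (1/2::real)^j)"
    by (simp add: o_def case_prod_unfold)
  also have "\<dots> = (\<Sum>j\<in>set (map (\<lambda>(a, j, f). j) ps). (1/2::real)^j)"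
    using comb(2) by (rule sum_list_distinct_conv_sum_set)
  also have "\<dots> \<le> 1"
  proof (rule geom_set_bound)
    show "0 \<notin> set (map (\<lambda>(a, j, f). j) ps)" using comb(4) by fastforce
  qed auto
  finally show ?case .
qed




lemma mseq_Suc: "mseq (Suc k) = 2^(8*5^k)"
proof (induction k)
  case 0 then show ?case by simp
next
  case (Suc k)
  have "mseq (Suc (Suc k)) = (2^(8*5^k))^5" using Suc by simp
  also have "\<dots> = 2^(8*5^k*5)" by (rule power_mult[symmetric])
  also have "(8::nat)*5^k*5 = 8*5^Suc k" by simp
  finally show ?case .
qed

lemma sseq_Suc: "sseq (Suc k) = 32*5^k"
proof -
  have "mseq (Suc k) ^ 4 = (2::nat)^(8*5^k*4)"
    unfolding mseq_Suc by (rule power_mult[symmetric])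
  also have "(8::nat)*5^k*4 = 32*5^k" by simp
  finally have "mseq (Suc k) ^ 4 = (2::nat)^(32*5^k)" .
  then show ?thesis unfolding sseq_def
    by (intro the_equality) (auto simp: power_inject_exp)
qed

lemma nseq_pos: "nseq k \<ge> 1"
proof (induction k rule: nseq.induct)
  case 3 then show ?case by simp
qed auto

lemma nseq_big: assumes "j \<ge> 1" shows "mseq (2*j) * mseq (2*j) \<le> nseq (2*j)"
proof -
  obtain i where i: "2*j = Suc (Suc i)" using assms by (intro that[of "2*j-2"]) arith
  have "mseq (2*j) * mseq (2*j) \<le> mseq (2*j) ^ 4"
  proof -
    have "mseq (2*j) * mseq (2*j) = mseq (2*j) ^ 2" by (simp add: power2_eq_square)
    also have "\<dots> \<le> mseq (2*j) ^ 4" using mseq_pos by (intro power_increasing) auto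
    finally show ?thesis .
  qed
  also have "mseq (2*j) ^ 4 = 2 ^ sseq (2*j)"
  proof -
    have "mseq (2*j) ^ 4 = (2::nat) ^ (8*5^Suc i * 4)" unfolding i mseq_Suc by (rule power_mult[symmetric])
    also have "8*5^Suc i * 4 = sseq (2*j)" unfolding i sseq_Suc by simp
    finally show ?thesis .
  qed
  also have "\<dots> \<le> (2 * nseq (Suc i)) ^ sseq (2*j)"
    using nseq_pos[of "Suc i"] by (intro power_mono) auto
  also have "\<dots> = nseq (2*j)" unfolding i by simp
  finally show ?thesis .
qed

lemma mseq_ge_j: "mseq (2*j) \<ge> j"
proof -
  have "j \<le> 2^j" by (rule less_imp_le[OF less_exp])
  also have "(2::nat)^j \<le> 2^(2*j)" by (intro power_increasing) auto
  also have "\<dots> \<le> mseq (2*j)" by (rule mseq_ge)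
  finally show ?thesis .
qed




abbreviation zf :: "nat \<Rightarrow> real" where "zf \<equiv> (\<lambda>n. 0)"

lemma supp_restr: "supp (restr E f) \<subseteq> supp f"
  by (auto simp: supp_def restr_def)

lemma supp_empty_iff: "supp f = {} \<longleftrightarrow> f = zf"
  by (auto simp: supp_def)

lemma blk_restr:
  assumes "blk_less f g" "restr E f \<noteq> zf" "restr E g \<noteq> zf"
  shows "blk_less (restr E f) (restr E g)"
proof -
  have f: "finite (supp f)" "finite (supp g)" using assms(1) by (auto simp: blk_less_def c00_def)
  have ne: "supp (restr E f) \<noteq> {}" "supp (restr E g) \<noteq> {}" using assms(2,3) supp_empty_iff by auto
  have fin: "finite (supp (restr E f))" "finite (supp (restr E g))"
    using f supp_restr finite_subset by metis+
  have "Max (supp (restr E f)) \<le> Max (supp f)" using ne f supp_restr by (intro Max_mono) auto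
  moreover have "Min (supp g) \<le> Min (supp (restr E g))" using ne f supp_restr by (intro Min_antimono) auto
  moreover have "Max (supp f) < Min (supp g)" using assms(1) by (simp add: blk_less_def)
  ultimately have "Max (supp (restr E f)) < Min (supp (restr E g))" by linarith
  then show ?thesis using ne fin by (simp add: blk_less_def c00_def)
qed

lemma sorted_filter_map_restr:
  "sorted_wrt blk_less fs \<Longrightarrow> sorted_wrt blk_less (filter (\<lambda>g. g \<noteq> zf) (map (restr E) fs))"
proof (induction fs)
  case Nil then show ?case by simp
next
  case (Cons f fs)
  then show ?case by (auto intro: blk_restr)
qed

lemma sum_list_filter_eq:
  fixes F :: "'a \<Rightarrow> real"
  shows "(\<forall>x\<in>set xs. \<not> P x \<longrightarrow> F x = 0) \<Longrightarrow> (\<Sum>x\<leftarrow>filter P xs. F x) = (\<Sum>x\<leftarrow>xs. F x)"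
  by (induction xs) auto

lemma sum_list_filter_le:
  fixes F :: "'a \<Rightarrow> real"
  shows "(\<forall>x\<in>set xs. 0 \<le> F x) \<Longrightarrow> (\<Sum>x\<leftarrow>filter P xs. F x) \<le> (\<Sum>x\<leftarrow>xs. F x)"
  by (induction xs) auto

lemma restr_avgf:
  "restr E (avgf k fs) = avgf k (filter (\<lambda>g. g \<noteq> zf) (map (restr E) fs))"
proof
  fix n
  have "(\<Sum>g\<leftarrow>filter (\<lambda>g. g \<noteq> zf) (map (restr E) fs). g n) = (\<Sum>g\<leftarrow>map (restr E) fs. g n)"
    by (rule sum_list_filter_eq) auto
  also have "\<dots> = (if n \<in> E then (\<Sum>f\<leftarrow>fs. f n) else 0)"
    by (induction fs) (auto simp: restr_def)
  finally show "restr E (avgf k fs) n = avgf k (filter (\<lambda>g. g \<noteq> zf) (map (restr E) fs)) n"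
    by (simp add: avgf_def restr_def)
qed

lemma avgf_Nil: "avgf k [] = zf" by (simp add: avgf_def)

lemma restr_avg_G0:
  assumes "1 \<le> j" "length fs \<le> nseq (2*j)" "sorted_wrt blk_less fs"
    "\<forall>f\<in>set fs. restr E f = zf \<or> restr E f \<in> G0"
  shows "restr E (avgf (2*j) fs) = zf \<or> (\<exists>gs. gs \<noteq> [] \<and> length gs \<le> nseq (2*j) \<and> sorted_wrt blk_less gs
      \<and> (\<forall>g\<in>set gs. g \<in> G0) \<and> restr E (avgf (2*j) fs) = avgf (2*j) gs)"
proof -
  let ?gs = "filter (\<lambda>g. g \<noteq> zf) (map (restr E) fs)"
  have eq: "restr E (avgf (2*j) fs) = avgf (2*j) ?gs" by (rule restr_avgf)
  show ?thesis
  proof (cases "?gs = []")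
    case True then show ?thesis using eq avgf_Nil by simp
  next
    case False
    have "length ?gs \<le> length fs" by (metis length_filter_le length_map)
    then have l: "length ?gs \<le> nseq (2*j)" using assms(2) by linarith
    have g: "\<forall>g\<in>set ?gs. g \<in> G0" using assms(4) by auto
    have s: "sorted_wrt blk_less ?gs" using assms(3) by (rule sorted_filter_map_restr)
    show ?thesis using False eq l g s by blast
  qed
qed

lemma G0_restr: "f \<in> G0 \<Longrightarrow> restr E f = zf \<or> restr E f \<in> G0"
proof (induction f rule: G0.induct)
  case (unit k)
  then show ?case
  proof (cases "k \<in> E")
    case True
    then have "restr E (unitf k) = unitf k" by (auto simp: restr_def unitf_def)
    then show ?thesis using G0.unit by simp
  next
    case False
    then have "restr E (unitf k) = zf" by (auto simp: restr_def unitf_def)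
    then show ?thesis by simp
  qed
next
  case (neg f)
  have eq: "restr E (\<lambda>n. - f n) = (\<lambda>n. - restr E f n)" by (auto simp: restr_def)
  show ?case using neg.IH
  proof
    assume "restr E f = zf" then show ?thesis using eq by (simp add: fun_eq_iff)
  next
    assume "restr E f \<in> G0" then show ?thesis using eq G0.neg by simp
  qed
next
  case (avg j fs)
  have "restr E (avgf (2*j) fs) = zf \<or> (\<exists>gs. gs \<noteq> [] \<and> length gs \<le> nseq (2*j) \<and> sorted_wrt blk_less gs
      \<and> (\<forall>g\<in>set gs. g \<in> G0) \<and> restr E (avgf (2*j) fs) = avgf (2*j) gs)"
    using avg by (intro restr_avg_G0) auto
  then show ?case
  proof
    assume "\<exists>gs. gs \<noteq> [] \<and> length gs \<le> nseq (2*j) \<and> sorted_wrt blk_less gs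
      \<and> (\<forall>g\<in>set gs. g \<in> G0) \<and> restr E (avgf (2*j) fs) = avgf (2*j) gs"
    then obtain gs where gs: "gs \<noteq> []" "length gs \<le> nseq (2*j)" "sorted_wrt blk_less gs"
      "\<forall>g\<in>set gs. g \<in> G0" "restr E (avgf (2*j) fs) = avgf (2*j) gs" by blast
    have "avgf (2*j) gs \<in> G0" using avg(1) gs(1-4) by (intro G0.avg) auto
    then show ?thesis using gs(5) by simp
  qed simp
next
  case (comb ps)
  define h where "h = (\<lambda>(a::real, j::nat, f). (a, j, restr E f))"
  define P where "P = (\<lambda>(a::real, j::nat, f::nat\<Rightarrow>real). f \<noteq> zf)"
  define ps' where "ps' = filter P (map h ps)"
  have eq: "restr E (\<lambda>n. \<Sum>(a, j, f)\<leftarrow>ps. a * f n) = (\<lambda>n. \<Sum>(a, j, f)\<leftarrow>ps'. a * f n)"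
  proof
    fix n
    have "(\<Sum>(a, j, f)\<leftarrow>ps'. a * f n) = (\<Sum>x\<leftarrow>map h ps. (\<lambda>(a, j, f). a * f n) x)"
      unfolding ps'_def by (rule sum_list_filter_eq) (auto simp: P_def)
    also have "\<dots> = (\<Sum>x\<leftarrow>ps. (\<lambda>(a, j, f). a * restr E f n) x)"
      by (simp add: h_def o_def case_prod_unfold)
    also have "\<dots> = restr E (\<lambda>n. \<Sum>(a, j, f)\<leftarrow>ps. a * f n) n"
      by (cases "n \<in> E") (auto simp: restr_def case_prod_unfold)
    finally show "restr E (\<lambda>n. \<Sum>(a, j, f)\<leftarrow>ps. a * f n) n = (\<Sum>(a, j, f)\<leftarrow>ps'. a * f n)" by simp
  qed
  show ?case
  proof (cases "ps' = []")
    case True then show ?thesis using eq by simp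
  next
    case False
    have mem: "a \<in> \<rat> \<and> f \<in> G0 \<and>
             (\<exists>gs. j \<ge> 1 \<and> gs \<noteq> [] \<and> length gs \<le> nseq (2*j) \<and> sorted_wrt blk_less gs \<and>
                   (\<forall>g\<in>set gs. g \<in> G0) \<and> f = avgf (2*j) gs)" if x: "(a, j, f) \<in> set ps'" for a j f
    proof -
      obtain f0 where f0: "(a, j, f0) \<in> set ps" "f = restr E f0" "f \<noteq> zf"
        using x by (auto simp: ps'_def h_def P_def)
      have "a \<in> \<rat> \<and> (\<exists>gs. 1 \<le> j \<and> gs \<noteq> [] \<and> length gs \<le> nseq (2 * j) \<and>
                sorted_wrt blk_less gs \<and> (\<forall>g\<in>set gs. g \<in> G0 \<and> (restr E g = zf \<or> restr E g \<in> G0)) \<and> f0 = avgf (2 * j) gs)"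
        using bspec[OF comb(4) f0(1)] by auto
      then obtain gs where a: "a \<in> \<rat>" and gs: "1 \<le> j" "length gs \<le> nseq (2 * j)"
        "sorted_wrt blk_less gs" "\<forall>g\<in>set gs. restr E g = zf \<or> restr E g \<in> G0" "f0 = avgf (2 * j) gs"
        by blast
      have "restr E (avgf (2*j) gs) = zf \<or> (\<exists>gs'. gs' \<noteq> [] \<and> length gs' \<le> nseq (2*j) \<and> sorted_wrt blk_less gs'
        \<and> (\<forall>g\<in>set gs'. g \<in> G0) \<and> restr E (avgf (2*j) gs) = avgf (2*j) gs')"
        using gs by (intro restr_avg_G0) auto
      then obtain gs' where gs': "gs' \<noteq> []" "length gs' \<le> nseq (2*j)" "sorted_wrt blk_less gs'"
        "\<forall>g\<in>set gs'. g \<in> G0" "f = avgf (2*j) gs'"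
        using f0 gs(5) by auto
      have "f \<in> G0" using gs' gs(1) by (auto intro: G0.avg)
      then show ?thesis using a gs' gs(1) by blast
    qed
    have dist: "distinct (map (\<lambda>(a, j, f). j) ps')"
    proof -
      have "map (\<lambda>(a, j, f). j) (map h ps) = map (\<lambda>(a, j, f). j) ps"
        by (simp add: h_def o_def case_prod_unfold)
      then show ?thesis unfolding ps'_def using comb(2) distinct_map_filter by metis
    qed
    have sq: "(\<Sum>(a, j, f)\<leftarrow>ps'. a^2) \<le> 1"
    proof -
      have "(\<Sum>(a, j, f)\<leftarrow>ps'. a^2) \<le> (\<Sum>x\<leftarrow>map h ps. (\<lambda>(a, j, f). a^2) x)"
        unfolding ps'_def by (rule sum_list_filter_le) (auto simp: h_def)
      also have "\<dots> = (\<Sum>(a, j, f)\<leftarrow>ps. a^2)" by (simp add: h_def o_def case_prod_unfold)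
      finally show ?thesis using comb(3) by simp
    qed
    have "(\<lambda>n. \<Sum>(a, j, f)\<leftarrow>ps'. a * f n) \<in> G0"
      using False mem dist sq by (intro G0.comb) auto
    then show ?thesis using eq by simp
  qed
qed




lemma pair_eq_sum:
  assumes "finite S" "supp f \<subseteq> S"
  shows "pair f x = (\<Sum>n\<in>S. f n * x n)"
  unfolding pair_def using assms by (intro sum.mono_neutral_left) (auto simp: supp_def)

lemma pair_restr:
  assumes "finite (supp f)"
  shows "pair (restr E f) x = pair f (restr E x)"
proof -
  have "pair (restr E f) x = (\<Sum>n\<in>supp f. restr E f n * x n)"
    using assms supp_restr by (intro pair_eq_sum) auto
  also have "\<dots> = (\<Sum>n\<in>supp f. f n * restr E x n)"
    by (intro sum.cong) (auto simp: restr_def)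
  also have "\<dots> = pair f (restr E x)" by (simp add: pair_def)
  finally show ?thesis .
qed

lemma pair_neg: "pair (\<lambda>n. - f n) x = - pair f x"
  by (simp add: pair_def supp_def sum_negf)

lemma pair_bound:
  assumes "f \<in> G0" "finite S" "supp x \<subseteq> S"
  shows "\<bar>pair f x\<bar> \<le> (\<Sum>n\<in>S. \<bar>x n\<bar>)"
proof (cases "finite (supp f)")
  case True
  have "\<bar>pair f x\<bar> = \<bar>\<Sum>n\<in>S \<union> supp f. f n * x n\<bar>"
    using True assms by (subst pair_eq_sum[of "S \<union> supp f"]) auto
  also have "\<dots> \<le> (\<Sum>n\<in>S \<union> supp f. \<bar>f n * x n\<bar>)" by (rule sum_abs)
  also have "\<dots> \<le> (\<Sum>n\<in>S \<union> supp f. \<bar>x n\<bar>)"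
  proof (intro sum_mono)
    fix n
    have "\<bar>f n\<bar> * \<bar>x n\<bar> \<le> 1 * \<bar>x n\<bar>" using G0_bound[OF assms(1)] by (intro mult_right_mono) auto
    then show "\<bar>f n * x n\<bar> \<le> \<bar>x n\<bar>" by (simp add: abs_mult)
  qed
  also have "\<dots> = (\<Sum>n\<in>S. \<bar>x n\<bar>)"
    using True assms by (intro sum.mono_neutral_right) (auto simp: supp_def)
  finally show ?thesis .
next
  case False
  then show ?thesis by (simp add: pair_def sum_nonneg)
qed

lemma G0_nonempty: "G0 \<noteq> {}" using G0.unit by blast

lemma normG0_ge:
  assumes "finite (supp x)" "f \<in> G0"
  shows "\<bar>pair f x\<bar> \<le> normG0 x"
  unfolding normG0_def
proof (rule cSUP_upper[OF assms(2)])
  show "bdd_above ((\<lambda>f. \<bar>pair f x\<bar>) ` G0)"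
    using pair_bound[OF _ assms(1)] by (intro bdd_aboveI2) auto
qed

lemma normG0_le:
  assumes "finite S" "supp x \<subseteq> S"
  shows "normG0 x \<le> (\<Sum>n\<in>S. \<bar>x n\<bar>)"
  unfolding normG0_def using G0_nonempty pair_bound[OF _ assms] by (intro cSUP_least) auto

lemma normG0_approx:
  assumes "finite (supp x)" "t < normG0 x"
  shows "\<exists>f\<in>G0. t < pair f x"
proof -
  have bdd: "bdd_above ((\<lambda>f. \<bar>pair f x\<bar>) ` G0)"
    using pair_bound[OF _ assms(1)] by (intro bdd_aboveI2) auto
  obtain f where f: "f \<in> G0" "t < \<bar>pair f x\<bar>"
    using assms(2) less_cSUP_iff[OF G0_nonempty bdd] unfolding normG0_def by blast
  show ?thesis
  proof (cases "pair f x \<ge> 0")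
    case True then show ?thesis using f by auto
  next
    case False
    then have "t < pair (\<lambda>n. - f n) x" using f by (simp add: pair_neg)
    then show ?thesis using G0.neg[OF f(1)] by blast
  qed
qed

lemma coord_le_normG0:
  assumes "finite (supp x)"
  shows "\<bar>x n\<bar> \<le> normG0 x"
proof -
  have "pair (unitf n) x = x n"
    by (subst pair_eq_sum[of "{n}"]) (auto simp: supp_def unitf_def)
  then show ?thesis using normG0_ge[OF assms G0.unit[of n]] by simp
qed

lemma sum_list_sum_swap:
  fixes gs :: "(nat \<Rightarrow> real) list"
  shows "(\<Sum>n\<in>S. (\<Sum>g\<leftarrow>gs. g n) * x n) = (\<Sum>g\<leftarrow>gs. \<Sum>n\<in>S. g n * x n)"
  by (induction gs) (auto simp: sum.distrib distrib_right)

lemma pair_avgf: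
  assumes "finite S" "\<forall>g\<in>set gs. supp g \<subseteq> S"
  shows "pair (avgf k gs) x = (\<Sum>g\<leftarrow>gs. pair g x) / real (mseq k)"
proof -
  have supp: "supp (avgf k gs) \<subseteq> S"
  proof
    fix n assume n: "n \<in> supp (avgf k gs)"
    show "n \<in> S"
    proof (rule ccontr)
      assume "n \<notin> S"
      then have "\<forall>g\<in>set gs. g n = 0" using assms(2) by (auto simp: supp_def)
      then have "(\<Sum>g\<leftarrow>gs. g n) = 0" by (induction gs) auto
      then show False using n by (simp add: supp_def avgf_def)
    qed
  qed
  have "pair (avgf k gs) x = (\<Sum>n\<in>S. ((\<Sum>g\<leftarrow>gs. g n) * x n) / real (mseq k))"
    using pair_eq_sum[OF assms(1) supp] by (simp add: avgf_def)
  also have "\<dots> = (\<Sum>n\<in>S. (\<Sum>g\<leftarrow>gs. g n) * x n) / real (mseq k)"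
    by (simp add: sum_divide_distrib)
  also have "\<dots> = (\<Sum>g\<leftarrow>gs. \<Sum>n\<in>S. g n * x n) / real (mseq k)"
    by (simp add: sum_list_sum_swap)
  also have "\<dots> = (\<Sum>g\<leftarrow>gs. pair g x) / real (mseq k)"
  proof -
    have "map (\<lambda>g. \<Sum>n\<in>S. g n * x n) gs = map (\<lambda>g. pair g x) gs"
      using assms by (auto intro!: map_cong simp: pair_eq_sum)
    then show ?thesis by (metis (no_types, lifting))
  qed
  finally show ?thesis .
qed




fun build :: "('a list \<Rightarrow> 'a) \<Rightarrow> nat \<Rightarrow> 'a list" where
  "build g 0 = []"
| "build g (Suc n) = build g n @ [g (build g n)]"

lemma build_mem: "p < q \<Longrightarrow> g (build g p) \<in> set (build g q)"
  by (induction q) (auto simp: less_Suc_eq)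

lemma not_compact_sep:
  fixes S :: "'b::banach set"
  assumes "\<not> compact (closure S)"
  shows "\<exists>e>0. \<exists>x::nat \<Rightarrow> 'b. (\<forall>k. x k \<in> S) \<and> (\<forall>p q. p \<noteq> q \<longrightarrow> e \<le> dist (x p) (x q))"
proof -
  have "complete (closure S)" using complete_eq_closed[of "closure S"] by simp
  then have "\<not> (\<forall>\<epsilon>>0. \<exists>k. finite k \<and> closure S \<subseteq> (\<Union>x\<in>k. ball x \<epsilon>))"
    using assms compact_eq_totally_bounded[of "closure S"] by blast
  then obtain e where e: "e > 0" "\<forall>k. finite k \<longrightarrow> \<not> closure S \<subseteq> (\<Union>x\<in>k. ball x e)"
    by blast
  have claim: "\<exists>x\<in>S. \<forall>a\<in>k. e/2 \<le> dist a x" if "finite k" for k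
  proof (rule ccontr)
    assume "\<not> ?thesis"
    then have "S \<subseteq> (\<Union>a\<in>k. cball a (e/2))" by (force simp: not_le)
    then have "closure S \<subseteq> (\<Union>a\<in>k. cball a (e/2))"
      using that by (intro closure_minimal) (auto intro!: closed_Union)
    also have "\<dots> \<subseteq> (\<Union>a\<in>k. ball a e)" using e(1) by (force simp: subset_iff)
    finally show False using e(2) that by blast
  qed
  then have "\<forall>xs. \<exists>x. x \<in> S \<and> (\<forall>a\<in>set xs. e/2 \<le> dist a x)" by blast
  then obtain g where g: "\<And>xs. g xs \<in> S \<and> (\<forall>a\<in>set xs. e/2 \<le> dist a (g xs))" by metis
  define x where "x k = g (build g k)" for k
  have sep: "e/2 \<le> dist (x p) (x q)" if "p < q" for p q
    using g[of "build g q"] build_mem[OF that, of g] unfolding x_def by blast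
  have X2: "\<forall>p q. p \<noteq> q \<longrightarrow> e/2 \<le> dist (x p) (x q)"
  proof (intro allI impI)
    fix p q :: nat assume "p \<noteq> q"
    then consider "p < q" | "q < p" by linarith
    then show "e/2 \<le> dist (x p) (x q)" using sep by cases (metis dist_commute)+
  qed
  have X1: "\<forall>k. x k \<in> S" using g unfolding x_def by blast
  have X3: "0 < e/2" using e(1) by simp
  show ?thesis
    by (rule exI[where x="e/2"], rule conjI[OF X3], rule exI[where x=x], rule conjI[OF X1 X2])
qed

lemma diag_conv:
  fixes c :: "nat \<Rightarrow> nat \<Rightarrow> real"
  assumes "\<And>k n. \<bar>c k n\<bar> \<le> M"
  shows "\<exists>r. strict_mono r \<and> (\<forall>n. convergent (\<lambda>k. c (r k) n))"
proof -
  interpret subseqs "\<lambda>n s. convergent (\<lambda>k. c (s k) n)"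
  proof
    fix n and s :: "nat \<Rightarrow> nat" assume "strict_mono s"
    have "bounded (range (\<lambda>k. c (s k) n))"
      using assms by (auto simp: bounded_iff)
    then obtain l r where "strict_mono r" "((\<lambda>k. c (s k) n) \<circ> r) \<longlonglongrightarrow> l"
      using bounded_imp_convergent_subsequence by blast
    then show "\<exists>r'. strict_mono r' \<and> convergent (\<lambda>k. c ((s \<circ> r') k) n)"
      by (auto simp: convergent_def o_def)
  qed
  have "convergent (\<lambda>k. c (diagseq k) n)" for n
  proof -
    have "convergent (\<lambda>k. c ((diagseq \<circ> (+) (Suc n)) k) n)"
    proof (rule diagseq_holds)
      fix r s :: "nat \<Rightarrow> nat" and m :: nat assume "strict_mono r" "convergent (\<lambda>k. c (s k) m)"
      then show "convergent (\<lambda>k. c ((s \<circ> r) k) m)"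
        using convergent_subseq_convergent[of "\<lambda>k. c (s k) m" r] by (simp add: o_def)
    qed
    then have "convergent (\<lambda>k. c (diagseq (k + Suc n)) n)" by (simp add: o_def add.commute)
    then show ?thesis by (rule iffD1[OF convergent_ignore_initial_segment])
  qed
  then show ?thesis using subseq_diagseq by blast
qed




fun iterf :: "(nat \<Rightarrow> nat) \<Rightarrow> nat \<Rightarrow> nat" where
  "iterf f 0 = 0"
| "iterf f (Suc i) = f (iterf f i)"

lemma c00_lin: "x \<in> c00 \<Longrightarrow> y \<in> c00 \<Longrightarrow> (\<lambda>n. a * x n + b * y n) \<in> c00"
proof -
  assume "x \<in> c00" "y \<in> c00"
  then have "finite (supp x \<union> supp y)" by (simp add: c00_def)
  moreover have "supp (\<lambda>n. a * x n + b * y n) \<subseteq> supp x \<union> supp y" by (auto simp: supp_def)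
  ultimately show ?thesis by (simp add: c00_def finite_subset)
qed

lemma c00_zero: "zf \<in> c00" by (simp add: c00_def supp_def)

lemma c00_diff: "x \<in> c00 \<Longrightarrow> y \<in> c00 \<Longrightarrow> (\<lambda>n. x n - y n) \<in> c00"
  using c00_lin[of x y 1 "-1"] by simp

lemma c00_sum: "finite F \<Longrightarrow> (\<forall>i\<in>F. w i \<in> c00) \<Longrightarrow> (\<lambda>n. \<Sum>i\<in>F. w i n) \<in> c00"
proof (induction F rule: finite_induct)
  case empty then show ?case using c00_zero by simp
next
  case (insert i F)
  then show ?case using c00_lin[of "w i" "\<lambda>n. \<Sum>i\<in>F. w i n" 1 1] by simp
qed

lemma c00_restr: "x \<in> c00 \<Longrightarrow> restr E x \<in> c00"
  using supp_restr finite_subset by (simp add: c00_def) blast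

definition linc00 :: "((nat \<Rightarrow> real) \<Rightarrow> 'b::real_normed_vector) \<Rightarrow> bool" where
  "linc00 J \<longleftrightarrow> (\<forall>x\<in>c00. \<forall>y\<in>c00. \<forall>a b. J (\<lambda>n. a * x n + b * y n) = a *\<^sub>R J x + b *\<^sub>R J y)"

lemma linc00_app: "linc00 J \<Longrightarrow> x \<in> c00 \<Longrightarrow> y \<in> c00 \<Longrightarrow> J (\<lambda>n. a * x n + b * y n) = a *\<^sub>R J x + b *\<^sub>R J y"
  unfolding linc00_def by blast

lemma linc00_diff: "linc00 J \<Longrightarrow> x \<in> c00 \<Longrightarrow> y \<in> c00 \<Longrightarrow> J (\<lambda>n. x n - y n) = J x - J y"
  unfolding linc00_def by (drule bspec[of _ _ x], assumption, drule bspec[of _ _ y], assumption,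
      drule spec[of _ 1], drule spec[of _ "-1"]) simp

lemma linc00_zero: assumes "linc00 J" shows "J zf = 0"
proof -
  have "J (\<lambda>n. 0 * zf n + 0 * zf n) = 0 *\<^sub>R J zf + 0 *\<^sub>R J zf"
    by (rule linc00_app[OF assms c00_zero c00_zero])
  then show ?thesis by simp
qed

lemma linc00_sum: assumes "linc00 J" shows "finite F \<Longrightarrow> (\<forall>i\<in>F. w i \<in> c00) \<Longrightarrow> J (\<lambda>n. \<Sum>i\<in>F. w i n) = (\<Sum>i\<in>F. J (w i))"
proof (induction F rule: finite_induct)
  case empty then show ?case using linc00_zero[OF assms] by simp
next
  case (insert i F)
  have c: "(\<lambda>n. \<Sum>i\<in>F. w i n) \<in> c00" using insert(1) insert(4) by (intro c00_sum) auto
  have "J (\<lambda>n. 1 * w i n + 1 * (\<Sum>i\<in>F. w i n)) = 1 *\<^sub>R J (w i) + 1 *\<^sub>R J (\<lambda>n. \<Sum>i\<in>F. w i n)"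
    using insert(4) c by (intro linc00_app[OF assms]) auto
  then show ?case using insert by simp
qed

definition linY :: "'a::real_vector set \<Rightarrow> ('a \<Rightarrow> nat \<Rightarrow> real) \<Rightarrow> bool" where
  "linY Y U \<longleftrightarrow> (\<forall>y\<in>Y. \<forall>z\<in>Y. \<forall>a b. U (a *\<^sub>R y + b *\<^sub>R z) = (\<lambda>n. a * U y n + b * U z n))"

lemma linY_app: "linY Y U \<Longrightarrow> y \<in> Y \<Longrightarrow> z \<in> Y \<Longrightarrow> U (a *\<^sub>R y + b *\<^sub>R z) = (\<lambda>n. a * U y n + b * U z n)"
  unfolding linY_def by blast

lemma linY_diff: "linY Y U \<Longrightarrow> y \<in> Y \<Longrightarrow> z \<in> Y \<Longrightarrow> U (y - z) = (\<lambda>n. U y n - U z n)"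
  unfolding linY_def by (drule bspec[of _ _ y], assumption, drule bspec[of _ _ z], assumption,
      drule spec[of _ 1], drule spec[of _ "-1"]) simp

lemma linY_sum: assumes "linY Y U" "subspace Y" shows "finite F \<Longrightarrow> (\<forall>i\<in>F. z i \<in> Y) \<Longrightarrow>
    U (\<Sum>i\<in>F. z i) = (\<lambda>n. \<Sum>i\<in>F. U (z i) n)"
proof (induction F rule: finite_induct)
  case empty
  have "0 \<in> Y" using assms(2) by (rule subspace_0)
  have "U (0 *\<^sub>R 0 + 0 *\<^sub>R 0) = (\<lambda>n. 0 * U 0 n + 0 * U 0 n)" by (rule linY_app[OF assms(1) \<open>0 \<in> Y\<close> \<open>0 \<in> Y\<close>])
  then show ?case by simp
next
  case (insert i F)
  have c: "(\<Sum>i\<in>F. z i) \<in> Y" using insert(4) by (intro subspace_sum[OF assms(2)]) auto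
  have "U (1 *\<^sub>R z i + 1 *\<^sub>R (\<Sum>i\<in>F. z i)) = (\<lambda>n. 1 * U (z i) n + 1 * U (\<Sum>i\<in>F. z i) n)"
    using insert(4) c by (intro linY_app[OF assms(1)]) auto
  then show ?case using insert by simp
qed

lemma c0_coord_le: "x \<in> c0 \<Longrightarrow> \<bar>x n\<bar> \<le> supnorm x"
proof -
  assume "x \<in> c0"
  then have "convergent x" by (auto simp: c0_def convergent_def)
  then have "Bseq x" by (rule convergent_imp_Bseq)
  then obtain K where "\<And>n. norm (x n) \<le> K" using BseqE by metis
  then have "bdd_above (range (\<lambda>n. \<bar>x n\<bar>))" by (intro bdd_aboveI2) auto
  then show ?thesis unfolding supnorm_def by (rule cSUP_upper[OF UNIV_I])
qed

lemma supnorm_le: "(\<And>n. \<bar>x n\<bar> \<le> B) \<Longrightarrow> supnorm x \<le> B"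
  unfolding supnorm_def by (rule cSUP_least) auto

lemma sum_if_card:
  fixes A \<epsilon> :: real
  assumes "finite F" "0 \<le> A" "0 \<le> \<epsilon>" "card {i\<in>F. P i} \<le> 1"
  shows "(\<Sum>i\<in>F. if P i then A else \<epsilon>) \<le> A + card F * \<epsilon>"
proof -
  have "(\<Sum>i\<in>F. if P i then A else \<epsilon>) \<le> (\<Sum>i\<in>F. (if P i then A else 0) + \<epsilon>)"
    using assms by (intro sum_mono) auto
  also have "\<dots> = (\<Sum>i\<in>F. if P i then A else 0) + card F * \<epsilon>" by (simp add: sum.distrib)
  also have "(\<Sum>i\<in>F. if P i then A else 0) = (\<Sum>i\<in>{i\<in>F. P i}. A)"
    using assms(1) by (simp add: sum.inter_filter[symmetric])
  also have "\<dots> = card {i\<in>F. P i} * A" by simp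
  also have "\<dots> \<le> 1 * A" using assms(2,4) by (intro mult_right_mono) auto
  finally show ?thesis by simp
qed




lemma recip_lt: "0 < (\<epsilon>::real) \<Longrightarrow> 1/\<epsilon> < x \<Longrightarrow> 1/x < \<epsilon>"
proof -
  assume a: "0 < \<epsilon>" "1/\<epsilon> < x"
  then have x: "0 < x" by (smt (verit) divide_pos_pos)
  have "1 < \<epsilon> * x" using a by (simp add: divide_less_eq mult.commute)
  then show ?thesis using x by (simp add: divide_less_eq mult.commute)
qed

lemma restr_restr: "restr E (restr E x) = restr E x" by (auto simp: restr_def)

lemma pair_zf: "pair zf x = 0" by (simp add: pair_def supp_def)

lemma pair_inf: "\<not> finite (supp f) \<Longrightarrow> pair f x = 0" by (simp add: pair_def)

lemma core:
  fixes Yv :: "nat \<Rightarrow> 'a::real_normed_vector" and B :: "nat \<Rightarrow> nat \<Rightarrow> real"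
    and T :: "'a \<Rightarrow> 'b::real_normed_vector" and U :: "'a \<Rightarrow> nat \<Rightarrow> real"
    and JG :: "(nat \<Rightarrow> real) \<Rightarrow> 'b"
  assumes Ysub: "subspace Y" and YvY: "\<And>k. Yv k \<in> Y" and Yvn: "\<And>k. norm (Yv k) \<le> 1"
    and Ulin: "linY Y U" and Uc0: "\<And>y. y \<in> Y \<Longrightarrow> U y \<in> c0"
    and Ulow: "\<And>y. y \<in> Y \<Longrightarrow> c * norm y \<le> supnorm (U y)"
    and Uup: "\<And>y. y \<in> Y \<Longrightarrow> supnorm (U y) \<le> Cc * norm y" and cpos: "c > 0" and Cpos: "Cc > 0"
    and Tlin: "linear T" and Tb: "\<And>x. norm (T x) \<le> norm x * KT" and KTpos: "KT > 0"
    and Jlin: "linc00 JG" and Jn: "\<And>x. x \<in> c00 \<Longrightarrow> norm (JG x) = normG0 x"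
    and Bc: "\<And>k. B k \<in> c00" and Bd: "\<And>k. dist (T (Yv k)) (JG (B k)) < 1 / (real k + 1)"
    and epos: "e > 0" and sep: "\<And>p q. p \<noteq> q \<Longrightarrow> e \<le> dist (T (Yv p)) (T (Yv q))"
    and UC: "\<And>n. Cauchy (\<lambda>k. U (Yv k) n)" and BC: "\<And>n. Cauchy (\<lambda>k. B k n)"
  shows False
proof -
  have Ucoord: "\<bar>U (Yv k) n\<bar> \<le> Cc" for k n
  proof -
    have "\<bar>U (Yv k) n\<bar> \<le> supnorm (U (Yv k))" using c0_coord_le Uc0 YvY by blast
    also have "\<dots> \<le> Cc * norm (Yv k)" using Uup YvY by blast
    also have "\<dots> \<le> Cc * 1" using Yvn Cpos by (intro mult_left_mono) auto
    finally show ?thesis by simp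
  qed
  define A where "A = KT * (2 * Cc + 1) / c + 3"
  have "KT * (2 * Cc + 1) / c > 0" using KTpos Cpos cpos by (intro divide_pos_pos mult_pos_pos) auto
  then have Apos: "A > 0" by (simp add: A_def)
  obtain X :: nat where X: "4 * A / e < X" using reals_Archimedean2 by blast
  have XA: "A < real X * e / 4"
  proof -
    have "4 * A < real X * e" using X epos by (simp add: divide_less_eq)
    then show ?thesis by simp
  qed
  have X1: "X \<ge> 1"
  proof -
    have "0 < 4 * A / e" using Apos epos by simp
    then show ?thesis using X by (cases X) auto
  qed
  define j where "j = X"
  define m where "m = mseq (2*j)"
  define K where "K = m * X"
  have mpos: "m \<ge> 1" using mseq_pos m_def by simp
  have K1: "K \<ge> 1" using mpos X1 by (simp add: K_def)
  have Kn: "K \<le> nseq (2*j)"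
  proof -
    have "K \<le> m * m" unfolding K_def using mseq_ge_j[of j] by (simp add: m_def j_def)
    also have "\<dots> \<le> nseq (2*j)" unfolding m_def using nseq_big X1 j_def by simp
    finally show ?thesis .
  qed
  define \<epsilon> where "\<epsilon> = min (e/6) (1 / real K)"
  have \<epsilon>pos: "\<epsilon> > 0" using epos K1 by (simp add: \<epsilon>_def)
  have \<epsilon>e: "\<epsilon> \<le> e/6" by (simp add: \<epsilon>_def)
  have K\<epsilon>: "real K * \<epsilon> \<le> 1"
  proof -
    have "\<epsilon> \<le> 1 / real K" by (simp add: \<epsilon>_def)
    then have "real K * \<epsilon> \<le> real K * (1 / real K)" using K1 by (intro mult_left_mono) auto
    then show ?thesis using K1 by simp
  qed

  define Pc where "Pc = (\<lambda>L p q R. L < R \<and> p \<noteq> q \<and> 1 / (real p + 1) \<le> \<epsilon> \<and> 1 / (real q + 1) \<le> \<epsilon> \<and>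
     (\<forall>n<L. \<bar>U (Yv p) n - U (Yv q) n\<bar> \<le> \<epsilon> \<and> \<bar>B p n - B q n\<bar> \<le> \<epsilon> / (real L + 1)) \<and>
     (\<forall>n\<ge>R. \<bar>U (Yv p) n - U (Yv q) n\<bar> \<le> \<epsilon> \<and> B p n = 0 \<and> B q n = 0))"
  have ex: "\<exists>p q R. Pc L p q R" for L
  proof -
    have "\<forall>n. \<exists>N. \<forall>p\<ge>N. \<forall>q\<ge>N. \<bar>U (Yv p) n - U (Yv q) n\<bar> < \<epsilon>"
      using CauchyD[OF UC \<epsilon>pos] by (simp add: real_norm_def)
    then obtain N1 where N1: "\<And>n p q. p \<ge> N1 n \<Longrightarrow> q \<ge> N1 n \<Longrightarrow> \<bar>U (Yv p) n - U (Yv q) n\<bar> < \<epsilon>"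
      by metis
    have \<epsilon>L: "\<epsilon> / (real L + 1) > 0" using \<epsilon>pos by simp
    have "\<forall>n. \<exists>N. \<forall>p\<ge>N. \<forall>q\<ge>N. \<bar>B p n - B q n\<bar> < \<epsilon> / (real L + 1)"
      using CauchyD[OF BC \<epsilon>L] by (simp add: real_norm_def)
    then obtain N2 where N2: "\<And>n p q. p \<ge> N2 n \<Longrightarrow> q \<ge> N2 n \<Longrightarrow> \<bar>B p n - B q n\<bar> < \<epsilon> / (real L + 1)"
      by metis
    obtain N0 :: nat where N0: "1 / \<epsilon> < N0" using reals_Archimedean2 by blast
    define p where "p = N0 + (\<Sum>n<L. N1 n + N2 n)"
    define q where "q = Suc p"
    have Nle: "N1 n \<le> p \<and> N2 n \<le> p" if "n < L" for n
    proof -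
      have "N1 n + N2 n \<le> (\<Sum>n<L. N1 n + N2 n)" using that by (intro member_le_sum) auto
      then show ?thesis unfolding p_def by simp
    qed
    have p\<epsilon>: "1 / (real p + 1) \<le> \<epsilon>"
    proof -
      have "N0 \<le> p" by (simp add: p_def)
      then have "1 / \<epsilon> < real p + 1" using N0 by linarith
      then show ?thesis using recip_lt[OF \<epsilon>pos] by fastforce
    qed
    have q\<epsilon>: "1 / (real q + 1) \<le> \<epsilon>"
    proof -
      have "N0 \<le> q" by (simp add: q_def p_def)
      then have "1 / \<epsilon> < real q + 1" using N0 by linarith
      then show ?thesis using recip_lt[OF \<epsilon>pos] by fastforce
    qed
    have \<epsilon>2: "\<epsilon>/2 > 0" using \<epsilon>pos by simp
    have "(\<lambda>n. U (Yv p) n) \<longlonglongrightarrow> 0" using Uc0[OF YvY] by (simp add: c0_def)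
    then obtain R1 where R1: "\<And>n. n \<ge> R1 \<Longrightarrow> \<bar>U (Yv p) n\<bar> < \<epsilon>/2"
      using LIMSEQ_D[OF _ \<epsilon>2] by (metis real_norm_def diff_zero)
    have "(\<lambda>n. U (Yv q) n) \<longlonglongrightarrow> 0" using Uc0[OF YvY] by (simp add: c0_def)
    then obtain R1' where R1': "\<And>n. n \<ge> R1' \<Longrightarrow> \<bar>U (Yv q) n\<bar> < \<epsilon>/2"
      using LIMSEQ_D[OF _ \<epsilon>2] by (metis real_norm_def diff_zero)
    have "finite (supp (B p) \<union> supp (B q))" using Bc by (simp add: c00_def)
    then obtain R2 where R2: "supp (B p) \<union> supp (B q) \<subseteq> {..<R2}" using finite_nat_bounded by blast
    define R where "R = Suc L + R1 + R1' + R2"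
    have "Pc L p q R"
      unfolding Pc_def
    proof (intro conjI allI impI)
      show "L < R" by (simp add: R_def)
      show "p \<noteq> q" by (simp add: q_def)
      show "1 / (real p + 1) \<le> \<epsilon>" by (rule p\<epsilon>)
      show "1 / (real q + 1) \<le> \<epsilon>" by (rule q\<epsilon>)
      fix n
      { assume "n < L"
        then show "\<bar>U (Yv p) n - U (Yv q) n\<bar> \<le> \<epsilon>" using N1[of n p q] Nle[of n] by (simp add: q_def)
      }
      { assume "n < L"
        then show "\<bar>B p n - B q n\<bar> \<le> \<epsilon> / (real L + 1)" using N2[of n p q] Nle[of n] by (simp add: q_def)
      }
      { assume n: "R \<le> n"
        then have "\<bar>U (Yv p) n\<bar> < \<epsilon>/2" "\<bar>U (Yv q) n\<bar> < \<epsilon>/2" using R1 R1' by (auto simp: R_def)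
        then show "\<bar>U (Yv p) n - U (Yv q) n\<bar> \<le> \<epsilon>" by linarith
      }
      { assume n: "R \<le> n"
        then have "n \<notin> supp (B p)" using R2 by (auto simp: R_def)
        then show "B p n = 0" by (simp add: supp_def)
      }
      { assume n: "R \<le> n"
        then have "n \<notin> supp (B q)" using R2 by (auto simp: R_def)
        then show "B q n = 0" by (simp add: supp_def)
      }
    qed
    then show ?thesis by blast
  qed
  then obtain pf qf Rf where PcF: "\<And>L. Pc L (pf L) (qf L) (Rf L)" by metis
  define Ls where "Ls = iterf Rf"
  have Ls_Suc: "Ls (Suc i) = Rf (Ls i)" for i by (simp add: Ls_def)
  define p where "p i = pf (Ls i)" for i
  define q where "q i = qf (Ls i)" for i
  have PcI: "Pc (Ls i) (p i) (q i) (Ls (Suc i))" for i unfolding p_def q_def Ls_Suc by (rule PcF)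
  have Ls_lt: "Ls i < Ls (Suc i)" for i using PcI[of i] unfolding Pc_def by blast
  have Ls_mono: "Ls i \<le> Ls i'" if "i \<le> i'" for i i'
  proof -
    have "Ls n \<le> Ls (Suc n)" for n using Ls_lt[of n] by linarith
    then show ?thesis using that by (rule lift_Suc_mono_le[of Ls])
  qed
  define I where "I i = {Ls i..<Ls (Suc i)}" for i
  have Idisj: "i = i'" if "n \<in> I i" "n \<in> I i'" for n i i'
  proof (rule ccontr)
    assume "i \<noteq> i'"
    then consider "Suc i \<le> i'" | "Suc i' \<le> i" by linarith
    then show False
    proof cases
      case 1 then have "Ls (Suc i) \<le> Ls i'" by (rule Ls_mono)
      then show False using that by (auto simp: I_def)
    next
      case 2 then have "Ls (Suc i') \<le> Ls i" by (rule Ls_mono)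
      then show False using that by (auto simp: I_def)
    qed
  qed
  have IK: "I i \<subseteq> {..<Ls K}" if "i < K" for i
  proof -
    have "Ls (Suc i) \<le> Ls K" using that by (intro Ls_mono) simp
    then show ?thesis by (auto simp: I_def)
  qed

  define z where "z i = Yv (p i) - Yv (q i)" for i
  have zY: "z i \<in> Y" for i unfolding z_def using YvY Ysub by (intro subspace_diff) auto
  have Uz: "U (z i) = (\<lambda>n. U (Yv (p i)) n - U (Yv (q i)) n)" for i
    unfolding z_def by (rule linY_diff[OF Ulin YvY YvY])
  define v where "v i = (\<lambda>n. B (p i) n - B (q i) n)" for i
  have vc: "v i \<in> c00" for i unfolding v_def by (rule c00_diff[OF Bc Bc])
  define v' where "v' i = restr (I i) (v i)" for i
  have v'c: "v' i \<in> c00" for i unfolding v'_def by (rule c00_restr[OF vc])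

  define Z where "Z = (\<Sum>i<K. z i)"
  have ZY: "Z \<in> Y" unfolding Z_def using zY by (intro subspace_sum[OF Ysub]) auto
  have UZ: "U Z = (\<lambda>n. \<Sum>i<K. U (z i) n)" unfolding Z_def using zY by (intro linY_sum[OF Ulin Ysub]) auto
  have UZn: "\<bar>U Z n\<bar> \<le> 2 * Cc + 1" for n
  proof -
    have tm: "\<bar>U (z i) n\<bar> \<le> (if n \<in> I i then 2 * Cc else \<epsilon>)" for i
    proof (cases "n \<in> I i")
      case True
      have "\<bar>U (Yv (p i)) n - U (Yv (q i)) n\<bar> \<le> \<bar>U (Yv (p i)) n\<bar> + \<bar>U (Yv (q i)) n\<bar>" by (rule abs_triangle_ineq4)
      also have "\<dots> \<le> Cc + Cc" using Ucoord by (intro add_mono) auto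
      finally show ?thesis using True Uz by simp
    next
      case False
      then have "n < Ls i \<or> n \<ge> Ls (Suc i)" by (auto simp: I_def)
      then have "\<bar>U (Yv (p i)) n - U (Yv (q i)) n\<bar> \<le> \<epsilon>" using PcI[of i] unfolding Pc_def by auto
      then show ?thesis using False Uz by simp
    qed
    have card: "card {i\<in>{..<K}. n \<in> I i} \<le> 1"
      using Idisj by (subst One_nat_def, subst card_le_Suc0_iff_eq) auto
    have "\<bar>U Z n\<bar> \<le> (\<Sum>i<K. \<bar>U (z i) n\<bar>)" unfolding UZ by (rule sum_abs)
    also have "\<dots> \<le> (\<Sum>i<K. if n \<in> I i then 2 * Cc else \<epsilon>)" by (intro sum_mono tm)
    also have "\<dots> \<le> 2 * Cc + card {..<K} * \<epsilon>"
      using Cpos \<epsilon>pos card by (intro sum_if_card) auto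
    also have "\<dots> \<le> 2 * Cc + 1" using K\<epsilon> by simp
    finally show ?thesis .
  qed
  have "c * norm Z \<le> 2 * Cc + 1"
    using Ulow[OF ZY] supnorm_le[of "U Z", OF UZn] by linarith
  then have nZ: "norm Z \<le> (2 * Cc + 1) / c" using cpos by (simp add: field_simps)
  have nTZ: "norm (T Z) \<le> KT * (2 * Cc + 1) / c"
  proof -
    have "norm (T Z) \<le> norm Z * KT" by (rule Tb)
    also have "\<dots> \<le> (2 * Cc + 1) / c * KT" using nZ KTpos by (intro mult_right_mono) auto
    finally show ?thesis by (simp add: mult.commute)
  qed

  have Bd': "norm (T (Yv k) - JG (B k)) \<le> \<epsilon>" if "1 / (real k + 1) \<le> \<epsilon>" for k
    using Bd[of k] that by (simp add: dist_norm)
  have est: "norm (T (z i) - JG (v' i)) \<le> 3 * \<epsilon>" for i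
  proof -
    have P: "Pc (Ls i) (p i) (q i) (Ls (Suc i))" by (rule PcI)
    have e1: "norm (T (Yv (p i)) - JG (B (p i))) \<le> \<epsilon>" using P unfolding Pc_def by (intro Bd') auto
    have e2: "norm (T (Yv (q i)) - JG (B (q i))) \<le> \<epsilon>" using P unfolding Pc_def by (intro Bd') auto
    have Tz: "T (z i) = T (Yv (p i)) - T (Yv (q i))" unfolding z_def by (rule linear_diff[OF Tlin])
    have Jv: "JG (v i) = JG (B (p i)) - JG (B (q i))" unfolding v_def by (rule linc00_diff[OF Jlin Bc Bc])
    have a: "norm (T (z i) - JG (v i)) \<le> 2 * \<epsilon>"
    proof -
      have "T (z i) - JG (v i) = (T (Yv (p i)) - JG (B (p i))) - (T (Yv (q i)) - JG (B (q i)))"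
        using Tz Jv by (simp add: algebra_simps)
      then have "norm (T (z i) - JG (v i)) \<le> norm (T (Yv (p i)) - JG (B (p i))) + norm (T (Yv (q i)) - JG (B (q i)))"
        by (metis norm_triangle_ineq4)
      then show ?thesis using e1 e2 by linarith
    qed
    define w where "w = (\<lambda>n. v i n - v' i n)"
    have wc: "w \<in> c00" unfolding w_def by (rule c00_diff[OF vc v'c])
    have wsupp: "supp w \<subseteq> {..<Ls i}"
    proof
      fix n assume n: "n \<in> supp w"
      show "n \<in> {..<Ls i}"
      proof (rule ccontr)
        assume "n \<notin> {..<Ls i}"
        then have nL: "n \<ge> Ls i" by simp
        show False
        proof (cases "n < Ls (Suc i)")
          case True
          then have "n \<in> I i" using nL by (simp add: I_def)
          then have "w n = 0" by (simp add: w_def v'_def restr_def)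
          then show False using n by (simp add: supp_def)
        next
          case False
          then have "B (p i) n = 0" "B (q i) n = 0" using P unfolding Pc_def by auto
          moreover have "n \<notin> I i" using False by (simp add: I_def)
          ultimately have "w n = 0" by (simp add: w_def v'_def v_def restr_def)
          then show False using n by (simp add: supp_def)
        qed
      qed
    qed
    have "normG0 w \<le> (\<Sum>n<Ls i. \<bar>w n\<bar>)" by (rule normG0_le[OF _ wsupp]) simp
    also have "\<dots> \<le> (\<Sum>n<Ls i. \<epsilon> / (real (Ls i) + 1))"
    proof (intro sum_mono)
      fix n assume "n \<in> {..<Ls i}"
      then have "n < Ls i" "n \<notin> I i" by (auto simp: I_def)
      then have "w n = v i n" "\<bar>v i n\<bar> \<le> \<epsilon> / (real (Ls i) + 1)"
        using P unfolding Pc_def by (auto simp: w_def v'_def restr_def v_def)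
      then show "\<bar>w n\<bar> \<le> \<epsilon> / (real (Ls i) + 1)" by simp
    qed
    also have "\<dots> = real (Ls i) * (\<epsilon> / (real (Ls i) + 1))" by simp
    also have "\<dots> \<le> \<epsilon>"
    proof -
      have "real (Ls i) / (real (Ls i) + 1) \<le> 1" by simp
      then have "real (Ls i) / (real (Ls i) + 1) * \<epsilon> \<le> 1 * \<epsilon>" using \<epsilon>pos by (intro mult_right_mono) auto
      then show ?thesis by simp
    qed
    finally have nw: "normG0 w \<le> \<epsilon>" .
    have "JG (v i) - JG (v' i) = JG w" unfolding w_def by (rule linc00_diff[OF Jlin vc v'c, symmetric])
    then have b: "norm (JG (v i) - JG (v' i)) \<le> \<epsilon>" using nw Jn[OF wc] by simp
    have "T (z i) - JG (v' i) = (T (z i) - JG (v i)) + (JG (v i) - JG (v' i))" by simp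
    then have "norm (T (z i) - JG (v' i)) \<le> norm (T (z i) - JG (v i)) + norm (JG (v i) - JG (v' i))"
      by (metis norm_triangle_ineq)
    then show ?thesis using a b by linarith
  qed
  have nTz: "e \<le> norm (T (z i))" for i
  proof -
    have "p i \<noteq> q i" using PcI[of i] unfolding Pc_def by blast
    then have "e \<le> dist (T (Yv (p i))) (T (Yv (q i)))" by (rule sep)
    then show ?thesis unfolding z_def dist_norm by (simp add: linear_diff[OF Tlin])
  qed
  have nv': "e/2 \<le> normG0 (v' i)" for i
  proof -
    have "norm (T (z i)) \<le> norm (JG (v' i)) + norm (T (z i) - JG (v' i))"
      by (metis norm_triangle_sub)
    then have "e \<le> normG0 (v' i) + 3 * \<epsilon>" using nTz[of i] est[of i] Jn[OF v'c[of i]] by linarith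
    then show ?thesis using \<epsilon>e by linarith
  qed
  have "\<exists>f\<in>G0. e/4 < pair f (v' i)" for i
  proof (rule normG0_approx)
    show "finite (supp (v' i))" using v'c by (simp add: c00_def)
    show "e/4 < normG0 (v' i)" using nv'[of i] epos by linarith
  qed
  then obtain fi where fiG: "\<And>i. fi i \<in> G0" and fip: "\<And>i. e/4 < pair (fi i) (v' i)" by metis
  define g where "g i = restr (I i) (fi i)" for i
  have fifin: "finite (supp (fi i))" for i
    using fip[of i] epos pair_inf[of "fi i" "v' i"] by (metis less_le_not_le divide_pos_pos zero_less_numeral)
  have gp: "pair (g i) (v' i) = pair (fi i) (v' i)" for i
    unfolding g_def by (simp add: pair_restr[OF fifin] v'_def restr_restr)
  have gnz: "g i \<noteq> zf" for i
  proof
    assume "g i = zf"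
    then have "pair (g i) (v' i) = 0" by (simp add: pair_zf)
    then show False using gp[of i] fip[of i] epos by simp
  qed
  have gG: "g i \<in> G0" for i using G0_restr[OF fiG[of i], of "I i"] gnz[of i] by (simp add: g_def)
  have gsupp: "supp (g i) \<subseteq> I i" for i by (auto simp: g_def supp_def restr_def)
  have gfin: "finite (supp (g i))" for i using gsupp[of i] by (rule finite_subset) (simp add: I_def)
  have gne: "supp (g i) \<noteq> {}" for i using gnz[of i] supp_empty_iff by blast
  have gblk: "blk_less (g i) (g i')" if "i < i'" for i i'
  proof -
    have "Max (supp (g i)) \<in> I i" using Max_in[OF gfin gne] gsupp by blast
    moreover have "Min (supp (g i')) \<in> I i'" using Min_in[OF gfin gne] gsupp by blast
    moreover have "Ls (Suc i) \<le> Ls i'" using that by (intro Ls_mono) simp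
    ultimately have "Max (supp (g i)) < Min (supp (g i'))" by (auto simp: I_def)
    then show ?thesis using gfin gne by (simp add: blk_less_def c00_def)
  qed
  define gs where "gs = map g [0..<K]"
  have gs_sorted: "sorted_wrt blk_less gs"
    unfolding gs_def sorted_wrt_map by (rule sorted_wrt_mono_rel[OF _ sorted_wrt_upt]) (use gblk in auto)
  have FG: "avgf (2*j) gs \<in> G0"
  proof (rule G0.avg)
    show "1 \<le> j" using X1 by (simp add: j_def)
    show "gs \<noteq> []" using K1 by (simp add: gs_def)
    show "length gs \<le> nseq (2*j)" using Kn by (simp add: gs_def)
    show "sorted_wrt blk_less gs" by (rule gs_sorted)
    show "\<forall>f\<in>set gs. f \<in> G0" using gG by (auto simp: gs_def)
  qed
  define V where "V = (\<lambda>n. \<Sum>i<K. v' i n)"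
  have Vc: "V \<in> c00" unfolding V_def using v'c by (intro c00_sum) auto
  have v'supp: "supp (v' i) \<subseteq> I i" for i by (auto simp: v'_def supp_def restr_def)
  have restrV: "restr (I i) V = v' i" if "i < K" for i
  proof
    fix n
    show "restr (I i) V n = v' i n"
    proof (cases "n \<in> I i")
      case True
      have "V n = (\<Sum>i'<K. if i' = i then v' i n else 0)"
        unfolding V_def
      proof (intro sum.cong refl)
        fix i' assume "i' \<in> {..<K}"
        show "v' i' n = (if i' = i then v' i n else 0)"
        proof (cases "i' = i")
          case False
          then have "n \<notin> I i'" using Idisj True by blast
          then show ?thesis using False by (simp add: v'_def restr_def)
        qed simp
      qed
      also have "\<dots> = v' i n" using that by (simp add: sum.delta)
      finally show ?thesis using True by (simp add: restr_def)
    next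
      case False then show ?thesis by (simp add: restr_def v'_def)
    qed
  qed
  have pgV: "e/4 < pair (g i) V" if "i < K" for i
  proof -
    have "pair (g i) V = pair (fi i) (restr (I i) V)" unfolding g_def by (rule pair_restr[OF fifin])
    also have "\<dots> = pair (fi i) (v' i)" using restrV[OF that] by simp
    finally show ?thesis using fip[of i] by simp
  qed
  have pFV: "pair (avgf (2*j) gs) V = (\<Sum>i<K. pair (g i) V) / real m"
  proof -
    have "pair (avgf (2*j) gs) V = (\<Sum>h\<leftarrow>gs. pair h V) / real (mseq (2*j))"
    proof (rule pair_avgf[of "{..<Ls K}"])
      show "\<forall>h\<in>set gs. supp h \<subseteq> {..<Ls K}"
        using gsupp IK by (force simp: gs_def)
    qed simp
    also have "(\<Sum>h\<leftarrow>gs. pair h V) = (\<Sum>i<K. pair (g i) V)"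
      unfolding gs_def by (simp add: sum_set_upt_conv_sum_list_nat[symmetric] atLeast0LessThan o_def)
    finally show ?thesis by (simp add: m_def)
  qed
  have "real K * (e/4) \<le> (\<Sum>i<K. pair (g i) V)"
  proof -
    have "(\<Sum>i<K. e/4) \<le> (\<Sum>i<K. pair (g i) V)" using pgV by (intro sum_mono) (simp add: less_imp_le)
    then show ?thesis by simp
  qed
  then have "real K * (e/4) / real m \<le> (\<Sum>i<K. pair (g i) V) / real m" by (rule divide_right_mono) simp
  then have "real K * (e/4) / real m \<le> pair (avgf (2*j) gs) V" using pFV by simp
  moreover have "real K * (e/4) / real m = real X * e / 4" using mpos by (simp add: K_def)
  moreover have "\<bar>pair (avgf (2*j) gs) V\<bar> \<le> normG0 V" using Vc FG by (intro normG0_ge) (simp_all add: c00_def)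
  ultimately have low: "real X * e / 4 \<le> normG0 V" by linarith

  have JV: "JG V = (\<Sum>i<K. JG (v' i))" unfolding V_def using v'c by (intro linc00_sum[OF Jlin]) auto
  have TZ: "T Z = (\<Sum>i<K. T (z i))" unfolding Z_def by (rule linear_sum[OF Tlin])
  have "norm (JG V - T Z) = norm (\<Sum>i<K. JG (v' i) - T (z i))" by (simp add: JV TZ sum_subtractf)
  also have "\<dots> \<le> (\<Sum>i<K. norm (JG (v' i) - T (z i)))" by (rule norm_sum)
  also have "\<dots> \<le> (\<Sum>i<K. 3 * \<epsilon>)" using est by (intro sum_mono) (simp add: norm_minus_commute)
  also have "\<dots> = 3 * (real K * \<epsilon>)" by simp
  also have "\<dots> \<le> 3" using K\<epsilon> by simp
  finally have d: "norm (JG V - T Z) \<le> 3" .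
  have "normG0 V = norm (JG V)" using Jn[OF Vc] by simp
  also have "\<dots> \<le> norm (T Z) + norm (JG V - T Z)" by (metis norm_triangle_sub add.commute)
  also have "\<dots> \<le> A" using nTZ d by (simp add: A_def)
  finally show False using low XA by linarith
qed




theorem mainTheorem15:
  fixes \<Omega>1 \<Omega>2 :: "nat set"
    and \<sigma> :: "(nat \<Rightarrow> real) list \<Rightarrow> nat"
    and J0 :: "(nat \<Rightarrow> real) \<Rightarrow> 'a::banach"
    and JG :: "(nat \<Rightarrow> real) \<Rightarrow> 'b::banach"
    and T :: "'a \<Rightarrow> 'b"
    and Y :: "'a set"
  assumes "infinite \<Omega>1" and "infinite \<Omega>2" and "\<Omega>1 \<inter> \<Omega>2 = {}"
    and "0 \<notin> \<Omega>1" and "0 \<notin> \<Omega>2"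
    and "admissible_sigma \<Omega>2 \<sigma>"
    and "is_completion (normW0 \<sigma> \<Omega>1) J0"
    and "is_completion normG0 JG"
    and "bounded_linear T" and "\<forall>x\<in>c00. T (J0 x) = JG x"
    and "subspace Y" and "closed Y" and "\<nexists>B. finite B \<and> span B = Y"
    and "\<not> compact (closure (T ` (Y \<inter> cball 0 1)))"
  shows "\<not> iso_to_subspace_c0 Y"
proof
  assume "iso_to_subspace_c0 Y"
  then obtain U where U1: "\<forall>y\<in>Y. U y \<in> c0"
    and Ulin': "\<forall>y\<in>Y. \<forall>z\<in>Y. \<forall>a b. U (a *\<^sub>R y + b *\<^sub>R z) = (\<lambda>n. a * U y n + b * U z n)"
    and U3: "\<exists>c C. 0 < c \<and> 0 < C \<and> (\<forall>y\<in>Y. c * norm y \<le> supnorm (U y) \<and> supnorm (U y) \<le> C * norm y)"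
    unfolding iso_to_subspace_c0_def by blast
  from U3 obtain c Cc where cpos: "0 < c" and Cpos: "0 < Cc"
    and Ub': "\<forall>y\<in>Y. c * norm y \<le> supnorm (U y) \<and> supnorm (U y) \<le> Cc * norm y" by blast
  have Uc0: "\<And>y. y \<in> Y \<Longrightarrow> U y \<in> c0" using U1 by blast
  have Ub: "\<And>y. y \<in> Y \<Longrightarrow> c * norm y \<le> supnorm (U y) \<and> supnorm (U y) \<le> Cc * norm y" using Ub' by blast
  have Ulin: "linY Y U" using Ulin' by (simp add: linY_def)
  have Jlin: "linc00 JG" and Jn: "\<And>x. x \<in> c00 \<Longrightarrow> norm (JG x) = normG0 x"
    and Jd: "closure (JG ` c00) = UNIV"
    using assms(8) unfolding is_completion_def linc00_def by auto
  have Tlin: "linear T" using assms(9) by (rule bounded_linear.linear)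
  obtain KT where KTpos: "KT > 0" and Tb: "\<And>x. norm (T x) \<le> norm x * KT"
    using bounded_linear.pos_bounded[OF assms(9)] by blast
  obtain e and w :: "nat \<Rightarrow> 'b" where epos: "e > 0" and wS: "\<And>k. w k \<in> T ` (Y \<inter> cball 0 1)"
    and wsep: "\<And>p q. p \<noteq> q \<Longrightarrow> e \<le> dist (w p) (w q)"
    using not_compact_sep[OF assms(14)] by blast
  have "\<forall>k. \<exists>y. y \<in> Y \<and> norm y \<le> 1 \<and> T y = w k"
  proof
    fix k
    obtain y where "y \<in> Y \<inter> cball 0 1" "w k = T y" using wS[of k] by (rule imageE)
    then show "\<exists>y. y \<in> Y \<and> norm y \<le> 1 \<and> T y = w k" by auto
  qed
  then obtain y where yY: "\<And>k. y k \<in> Y" and yn: "\<And>k. norm (y k) \<le> 1" and Ty: "\<And>k. T (y k) = w k"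
    by metis
  have "\<forall>k. \<exists>b\<in>c00. dist (JG b) (T (y k)) < 1 / (real k + 1)"
  proof
    fix k
    have "T (y k) \<in> closure (JG ` c00)" using Jd by simp
    moreover have "0 < 1 / (real k + 1)" by simp
    ultimately obtain u where "u \<in> JG ` c00" "dist u (T (y k)) < 1 / (real k + 1)"
      using closure_approachable[of "T (y k)" "JG ` c00"] by blast
    then show "\<exists>b\<in>c00. dist (JG b) (T (y k)) < 1 / (real k + 1)" by blast
  qed
  then obtain b where bc: "\<And>k. b k \<in> c00" and bd: "\<And>k. dist (JG (b k)) (T (y k)) < 1 / (real k + 1)"
    by metis
  have Ucoord: "\<bar>U (y k) n\<bar> \<le> Cc" for k n
  proof -
    have "\<bar>U (y k) n\<bar> \<le> supnorm (U (y k))" using c0_coord_le Uc0 yY by blast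
    also have "\<dots> \<le> Cc * norm (y k)" using Ub yY by blast
    also have "\<dots> \<le> Cc * 1" using yn Cpos by (intro mult_left_mono) auto
    finally show ?thesis by simp
  qed
  have bcoord: "\<bar>b k n\<bar> \<le> KT + 1" for k n
  proof -
    have "\<bar>b k n\<bar> \<le> normG0 (b k)" using bc by (intro coord_le_normG0) (simp add: c00_def)
    also have "\<dots> = norm (JG (b k))" using Jn[OF bc] by simp
    also have "\<dots> \<le> norm (T (y k)) + norm (JG (b k) - T (y k))" by (metis norm_triangle_sub add.commute)
    also have "\<dots> \<le> KT + 1"
    proof -
      have "norm (T (y k)) \<le> norm (y k) * KT" by (rule Tb)
      also have "\<dots> \<le> 1 * KT" using yn KTpos by (intro mult_right_mono) auto
      finally have 1: "norm (T (y k)) \<le> KT" by simp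
      have "norm (JG (b k) - T (y k)) < 1 / (real k + 1)" using bd[of k] by (simp add: dist_norm)
      also have "\<dots> \<le> 1" by simp
      finally show ?thesis using 1 by linarith
    qed
    finally show ?thesis .
  qed
  define cc where "cc k n = (if even n then U (y k) (n div 2) else b k (n div 2))" for k n
  have "\<bar>cc k n\<bar> \<le> Cc + (KT + 1)" for k n
    using Ucoord[of k "n div 2"] bcoord[of k "n div 2"] Cpos KTpos by (auto simp: cc_def)
  then obtain r where r: "strict_mono r" and rconv: "\<And>n. convergent (\<lambda>k. cc (r k) n)"
    using diag_conv by metis
  show False
  proof (rule core[where Yv = "y \<circ> r" and B = "b \<circ> r" and T = T and U = U and JG = JG and Y = Y
        and c = c and Cc = Cc and KT = KT and e = e])
    show "subspace Y" by (rule assms(11))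
    show "\<And>k. (y \<circ> r) k \<in> Y" using yY by simp
    show "\<And>k. norm ((y \<circ> r) k) \<le> 1" using yn by simp
    show "linY Y U" by (rule Ulin)
    show "\<And>y. y \<in> Y \<Longrightarrow> U y \<in> c0" by (rule Uc0)
    show "\<And>y. y \<in> Y \<Longrightarrow> c * norm y \<le> supnorm (U y)" using Ub by blast
    show "\<And>y. y \<in> Y \<Longrightarrow> supnorm (U y) \<le> Cc * norm y" using Ub by blast
    show "c > 0" "Cc > 0" "KT > 0" "e > 0" by fact+
    show "linear T" by (rule Tlin)
    show "\<And>x. norm (T x) \<le> norm x * KT" by (rule Tb)
    show "linc00 JG" by (rule Jlin)
    show "\<And>x. x \<in> c00 \<Longrightarrow> norm (JG x) = normG0 x" by (rule Jn)
    show "\<And>k. (b \<circ> r) k \<in> c00" using bc by simp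
    show "dist (T ((y \<circ> r) k)) (JG ((b \<circ> r) k)) < 1 / (real k + 1)" for k
    proof -
      have "k \<le> r k" using seq_suble[OF r] by blast
      then have "1 / (real (r k) + 1) \<le> 1 / (real k + 1)" by (intro divide_left_mono) auto
      moreover have "dist (T (y (r k))) (JG (b (r k))) < 1 / (real (r k) + 1)"
        using bd[of "r k"] by (simp add: dist_commute)
      ultimately show ?thesis by simp
    qed
    show "e \<le> dist (T ((y \<circ> r) p)) (T ((y \<circ> r) q))" if "p \<noteq> q" for p q
    proof -
      have "r p \<noteq> r q" using that r by (metis strict_mono_eq)
      then show ?thesis using wsep Ty by simp
    qed
    show "Cauchy (\<lambda>k. U ((y \<circ> r) k) n)" for n
    proof -
      have "convergent (\<lambda>k. cc (r k) (2*n))" by (rule rconv)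
      then have "convergent (\<lambda>k. U ((y \<circ> r) k) n)" by (simp add: cc_def)
      then show ?thesis by (rule convergent_Cauchy)
    qed
    show "Cauchy (\<lambda>k. (b \<circ> r) k n)" for n
    proof -
      have "convergent (\<lambda>k. cc (r k) (2*n+1))" by (rule rconv)
      then have "convergent (\<lambda>k. (b \<circ> r) k n)" by (simp add: cc_def)
      then show ?thesis by (rule convergent_Cauchy)
    qed
  qed
qed


end
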